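(* Let $U$ be an $n$-qubit unitary and $M^U$ the representation matrix of the channel $\rho\mapsto U\rho U^\dagger$. Then: (1) for $0<p<2$ and $0<q\le\infty$, $\|M^U\|_{p,q}\ge1$, with equality if and only if $U$ is a Clifford unitary; (2) for $p>2$ and $0<q<\infty$, $\|M^U\|_{p,q}\le1$, with equality if and only if $U$ is a Clifford unitary; (3) for $p=2$ and any $q>0$ (including $q=\infty$), and for $p>2$ and $q=\infty$, $\|M^U\|_{p,q}=1$.
   Context: Pauli notation: $P_{\vec z}=P_{z_1}\otimes\cdots\otimes P_{z_n}$ for $\vec z\in\{0,1,2,3\}^n$, $P_0=\mathbb I,P_1=X,P_2=Y,P_3=Z$. Representation matrix: $M^\Phi_{\vec z\vec x}=2^{-n}\mathrm{Tr}(P_{\vec z}\Phi(P_{\vec x}))$. A Clifford unitary is a unitary $U$ such that $UP_{\vec x}U^\dagger$ is, up to a phase, a Pauli operator for every $\vec x$. Group norm: $\|M\|_{p,q}=(\frac1{N_1}\sum_i\|M_i\|_p^q)^{1/q}$ for an $N_1\times N_2$ matrix with rows $M_i$ ($\max_i\|M_i\|_p$ if $q=\infty$); $\|\cdot\|_p$ for $0<p<1$ is the usual $(\sum|\cdot|^p)^{1/p}$ quasi-norm. *)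

theory Defs
  imports "HOL-Analysis.Analysis" "HOL-Library.Extended_Real"
begin

(* Square complex matrices of dimension d are represented as functions
   nat => nat => complex; only entries with indices < d are relevant. *)
type_synonym cmat = "nat \<Rightarrow> nat \<Rightarrow> complex"

definition mmul :: "nat \<Rightarrow> cmat \<Rightarrow> cmat \<Rightarrow> cmat" where
  "mmul d A B = (\<lambda>i j. \<Sum>k<d. A i k * B k j)"

definition adj :: "cmat \<Rightarrow> cmat" where
  "adj A = (\<lambda>i j. cnj (A j i))"

definition mtrace :: "nat \<Rightarrow> cmat \<Rightarrow> complex" where
  "mtrace d A = (\<Sum>i<d. A i i)"

definition is_unitary :: "nat \<Rightarrow> cmat \<Rightarrow> bool" where
  "is_unitary n U \<longleftrightarrow>
     (\<forall>i<2^n. \<forall>j<2^n. mmul (2^n) (adj U) U i j = (if i = j then 1 else 0)) \<and>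
     (\<forall>i<2^n. \<forall>j<2^n. mmul (2^n) U (adj U) i j = (if i = j then 1 else 0))"

(* single-qubit Paulis: 0 = I, 1 = X, 2 = Y, 3 = Z (2x2 entries indexed by 0/1) *)
definition pauli1 :: "nat \<Rightarrow> cmat" where
  "pauli1 a = (\<lambda>i j.
     if a = 0 then (if i = j then 1 else 0)
     else if a = 1 then (if i \<noteq> j then 1 else 0)
     else if a = 2 then (if i = 0 \<and> j = 1 then - \<i> else if i = 1 \<and> j = 0 then \<i> else 0)
     else (if i = j then (if i = 0 then 1 else -1) else 0))"

definition pauli_idx :: "nat \<Rightarrow> nat list set" where
  "pauli_idx n = {z. length z = n \<and> set z \<subseteq> {0..<4}}"

(* P_z = P_{z_1} \<otimes> ... \<otimes> P_{z_n}; qubit k (0-based position in z) is the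
   bit of weight 2^(n-1-k) of the row/column index (standard Kronecker order) *)
definition pauli :: "nat \<Rightarrow> nat list \<Rightarrow> cmat" where
  "pauli n z = (\<lambda>i j. \<Prod>k<n. pauli1 (z ! k) ((i div 2^(n-1-k)) mod 2) ((j div 2^(n-1-k)) mod 2))"

definition repmat :: "nat \<Rightarrow> cmat \<Rightarrow> nat list \<Rightarrow> nat list \<Rightarrow> complex" where
  "repmat n U z x = mtrace (2^n) (mmul (2^n) (pauli n z) (mmul (2^n) (mmul (2^n) U (pauli n x)) (adj U))) / 2^n"

definition row_pnorm :: "nat \<Rightarrow> cmat \<Rightarrow> real \<Rightarrow> nat list \<Rightarrow> real" where
  "row_pnorm n U p z = (\<Sum>x\<in>pauli_idx n. cmod (repmat n U z x) powr p) powr (1 / p)"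

definition group_norm :: "nat \<Rightarrow> cmat \<Rightarrow> real \<Rightarrow> ereal \<Rightarrow> real" where
  "group_norm n U p q =
     (if q = \<infinity> then Max (row_pnorm n U p ` pauli_idx n)
      else ((1 / real (card (pauli_idx n))) *
            (\<Sum>z\<in>pauli_idx n. row_pnorm n U p z powr real_of_ereal q)) powr (1 / real_of_ereal q))"

definition is_clifford :: "nat \<Rightarrow> cmat \<Rightarrow> bool" where
  "is_clifford n U \<longleftrightarrow> is_unitary n U \<and>
     (\<forall>x\<in>pauli_idx n. \<exists>c z. cmod c = 1 \<and> z \<in> pauli_idx n \<and>
        (\<forall>i<2^n. \<forall>j<2^n.
           mmul (2^n) (mmul (2^n) U (pauli n x)) (adj U) i j = c * pauli n z i j))"

end

theory Submission
  imports Defs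
begin


lemma sum_lessThan_add_split:
  "(\<Sum>i<(a::nat)+b. f i) = (\<Sum>i<a. f i) + (\<Sum>i<b. f (a+i))"
  by (induction b) (simp_all add: add.assoc)

lemma bit_shift_top:
  fixes i k n :: nat
  assumes "k < n"
  shows "(2^n + i) div 2^(n - Suc k) mod 2 = i div 2^(n - Suc k) mod 2"
proof -
  have nn: "n = (n-1-k) + Suc k" using assms by simp
  have e: "(2::nat)^n = 2^(n-1-k) * 2^(Suc k)"
    by (subst nn) (simp only: power_add)
  have "(2^n + i) div 2^(n - 1 - k) = 2^(Suc k) + i div 2^(n-1-k)"
    by (simp add: e)
  then show ?thesis by simp
qed

lemma bitsum:
  fixes G :: "nat \<Rightarrow> nat \<Rightarrow> 'a::comm_semiring_1"
  shows "(\<Sum>i<2^n. \<Prod>k<n. G k (i div 2^(n-1-k) mod 2)) = (\<Prod>k<n. G k 0 + G k 1)"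
proof (induction n arbitrary: G)
  case 0
  then show ?case by simp
next
  case (Suc n)
  have A: "(\<Prod>k<Suc n. G k (i div 2^(n-k) mod 2)) =
        G 0 0 * (\<Prod>k<n. G (Suc k) (i div 2^(n-1-k) mod 2))" if "i < 2^n" for i
    using that by (simp add: prod.lessThan_Suc_shift del: prod.lessThan_Suc)
  have B: "(\<Prod>k<Suc n. G k ((2^n+i) div 2^(n-k) mod 2)) =
        G 0 1 * (\<Prod>k<n. G (Suc k) (i div 2^(n-1-k) mod 2))" if "i < 2^n" for i
  proof -
    have "(2^n+i) div 2^n mod 2 = (1::nat)" using that by simp
    moreover have "(\<Prod>k<n. G (Suc k) ((2^n+i) div 2^(n-1-k) mod 2)) = (\<Prod>k<n. G (Suc k) (i div 2^(n-1-k) mod 2))"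
      by (rule prod.cong) (auto simp: bit_shift_top)
    ultimately show ?thesis by (simp add: prod.lessThan_Suc_shift del: prod.lessThan_Suc)
  qed
  have "(\<Sum>i<2^Suc n. \<Prod>k<Suc n. G k (i div 2^(Suc n-1-k) mod 2)) =
     (\<Sum>i<2^n. \<Prod>k<Suc n. G k (i div 2^(Suc n-1-k) mod 2)) + (\<Sum>i<2^n. \<Prod>k<Suc n. G k ((2^n+i) div 2^(Suc n-1-k) mod 2))"
    using sum_lessThan_add_split[of _ "2^n" "2^n"] by (simp add: mult_2 del: prod.lessThan_Suc)
  also have "\<dots> = G 0 0 * (\<Sum>i<2^n. \<Prod>k<n. G (Suc k) (i div 2^(n-1-k) mod 2)) + G 0 1 * (\<Sum>i<2^n. \<Prod>k<n. G (Suc k) (i div 2^(n-1-k) mod 2))"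
    by (simp add: A B sum_distrib_left del: prod.lessThan_Suc)
  also have "\<dots> = (G 0 0 + G 0 1) * (\<Prod>k<n. G (Suc k) 0 + G (Suc k) 1)"
    using Suc.IH[of "\<lambda>k. G (Suc k)"] by (simp add: distrib_right)
  also have "\<dots> = (\<Prod>k<Suc n. G k 0 + G k 1)"
    by (simp add: prod.lessThan_Suc_shift del: prod.lessThan_Suc)
  finally show ?case .
qed

lemma bit_inj:
  fixes i j n :: nat
  assumes "i < 2^n" "j < 2^n" "\<forall>k<n. i div 2^(n-1-k) mod 2 = j div 2^(n-1-k) mod 2"
  shows "i = j"
proof (rule bit_eqI)
  fix m
  show "bit i m = bit j m"
  proof (cases "m < n")
    case True
    then have "n - 1 - (n - 1 - m) = m" by simp
    with assms(3)[rule_format, of "n-1-m"] True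
    have "i div 2^m mod 2 = j div 2^m mod 2" by simp
    then show ?thesis by (simp add: bit_iff_odd odd_iff_mod_2_eq_one)
  next
    case False
    then have "i < 2^m" "j < 2^m" using assms(1,2)
      by (meson le_less_trans not_less one_less_numeral_iff power_increasing_iff semiring_norm(76) less_le_trans)+
    then show ?thesis by (simp add: bit_iff_odd)
  qed
qed

lemma pauli_idx_Suc:
  "pauli_idx (Suc n) = (\<lambda>(a,z). a#z) ` ({..<4} \<times> pauli_idx n)"
  unfolding pauli_idx_def by (auto simp: length_Suc_conv image_iff)

lemma finite_pauli_idx: "finite (pauli_idx n)"
  unfolding pauli_idx_def using finite_lists_length_eq[of "{0..<4::nat}" n] by (simp add: conj_commute)

lemma pauli_idx_0: "pauli_idx 0 = {[]}"
  unfolding pauli_idx_def by auto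

lemma paulisum:
  fixes H :: "nat \<Rightarrow> nat \<Rightarrow> 'a::comm_semiring_1"
  shows "(\<Sum>z\<in>pauli_idx n. \<Prod>k<n. H k (z!k)) = (\<Prod>k<n. \<Sum>a<4. H k a)"
proof (induction n arbitrary: H)
  case 0
  then show ?case by (simp add: pauli_idx_0)
next
  case (Suc n)
  have inj: "inj_on (\<lambda>(a,z). a#z) ({..<4::nat} \<times> pauli_idx n)" by (auto simp: inj_on_def)
  have "(\<Sum>z\<in>pauli_idx (Suc n). \<Prod>k<Suc n. H k (z!k))
      = (\<Sum>(a,z)\<in>{..<4} \<times> pauli_idx n. \<Prod>k<Suc n. H k ((a#z)!k))"
    unfolding pauli_idx_Suc sum.reindex[OF inj] by (simp add: case_prod_beta' del: prod.lessThan_Suc)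
  also have "\<dots> = (\<Sum>a<4. \<Sum>z\<in>pauli_idx n. H 0 a * (\<Prod>k<n. H (Suc k) (z!k)))"
    by (simp add: sum.cartesian_product[symmetric] prod.lessThan_Suc_shift del: prod.lessThan_Suc)
  also have "\<dots> = (\<Sum>a<4. H 0 a) * (\<Prod>k<n. \<Sum>a<4. H (Suc k) a)"
    using Suc.IH[of "\<lambda>k. H (Suc k)"] by (simp add: sum_distrib_left[symmetric] sum_distrib_right)
  also have "\<dots> = (\<Prod>k<Suc n. \<Sum>a<4. H k a)"
    by (simp add: prod.lessThan_Suc_shift del: prod.lessThan_Suc)
  finally show ?case .
qed



lemma bit_cases2: "(b::nat) < 2 \<Longrightarrow> b = 0 \<or> b = 1" by auto

lemma sum4: "(\<Sum>a<(4::nat). f a) = f 0 + f 1 + f 2 + f 3"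
  by (simp add: numeral_eq_Suc lessThan_Suc add.assoc add.commute add.left_commute)

lemma pauli1_complete:
  assumes "b1 < 2" "b2 < 2" "b3 < 2" "b4 < 2"
  shows "(\<Sum>a<4. pauli1 a b1 b2 * pauli1 a b4 b3) = (if b1 = b3 \<and> b2 = b4 then 2 else 0)"
  using bit_cases2[OF assms(1)] bit_cases2[OF assms(2)] bit_cases2[OF assms(3)] bit_cases2[OF assms(4)]
  by (auto simp: sum4 pauli1_def)

lemma pauli1_herm: "cnj (pauli1 a i j) = pauli1 a j i"
  by (auto simp: pauli1_def)

lemma pauli1_fro:
  assumes "b < 2"
  shows "cmod (pauli1 a b 0) ^ 2 + cmod (pauli1 a b (Suc 0)) ^ 2 = 1"
  using bit_cases2[OF assms] by (auto simp: pauli1_def)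

lemma prod_if_const:
  fixes c :: "'a::comm_semiring_1"
  shows "(\<Prod>m<n. if P m then c else 0) = (if (\<forall>m<n. P m) then c^n else 0)"
  by (induction n) (auto simp: mult.commute less_Suc_eq)

lemma prod_if_one:
  fixes P :: "nat \<Rightarrow> bool"
  shows "(\<Prod>m<n. if P m then (1::'a::comm_semiring_1) else 0) = (if (\<forall>m<n. P m) then 1 else 0)"
  using prod_if_const[of P 1 n] by (simp split: if_splits)

lemma bits_lt2: "(i::nat) div 2^e mod 2 < 2" by simp

lemma pauli_complete:
  assumes "i < 2^n" "j < 2^n" "k < 2^n" "l < 2^n"
  shows "(\<Sum>x\<in>pauli_idx n. pauli n x i j * pauli n x l k) = 2^n * (if i = k \<and> j = l then 1 else 0)"
proof -
  let ?b = "\<lambda>i m. i div 2^(n-1-m) mod (2::nat)"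
  have "(\<Sum>x\<in>pauli_idx n. pauli n x i j * pauli n x l k)
      = (\<Sum>x\<in>pauli_idx n. \<Prod>m<n. pauli1 (x!m) (?b i m) (?b j m) * pauli1 (x!m) (?b l m) (?b k m))"
    by (simp add: pauli_def prod.distrib)
  also have "\<dots> = (\<Prod>m<n. \<Sum>a<4. pauli1 a (?b i m) (?b j m) * pauli1 a (?b l m) (?b k m))"
    by (rule paulisum)
  also have "\<dots> = (\<Prod>m<n. if ?b i m = ?b k m \<and> ?b j m = ?b l m then 2 else 0)"
    by (rule prod.cong) (simp_all add: pauli1_complete bits_lt2 del: of_nat_numeral)
  also have "\<dots> = (if (\<forall>m<n. ?b i m = ?b k m \<and> ?b j m = ?b l m) then 2^n else 0)"
    by (rule prod_if_const)
  also have "(\<forall>m<n. ?b i m = ?b k m \<and> ?b j m = ?b l m) \<longleftrightarrow> i = k \<and> j = l"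
    using bit_inj[of i n k] bit_inj[of j n l] assms by auto
  finally show ?thesis by simp
qed

lemma pauli_herm: "cnj (pauli n x i j) = pauli n x j i"
  by (simp add: pauli_def pauli1_herm)

lemma pauli_fro:
  "(\<Sum>i<2^n. \<Sum>j<2^n. cmod (pauli n z i j) ^ 2) = 2^n"
proof -
  let ?b = "\<lambda>i m. i div 2^(n-1-m) mod (2::nat)"
  have "(\<Sum>j<2^n. cmod (pauli n z i j) ^ 2) = 1" if "i < 2^n" for i
  proof -
    have "(\<Sum>j<2^n. cmod (pauli n z i j) ^ 2) = (\<Sum>j<2^n. \<Prod>m<n. (\<lambda>m b. cmod (pauli1 (z!m) (?b i m) b) ^ 2) m (?b j m))"
      by (simp add: pauli_def prod_norm[symmetric] power_mult_distrib prod_power_distrib)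
    also have "\<dots> = (\<Prod>m<n. cmod (pauli1 (z!m) (?b i m) 0) ^ 2 + cmod (pauli1 (z!m) (?b i m) 1) ^ 2)"
      by (rule bitsum)
    also have "\<dots> = 1"
      by (rule prod.neutral) (simp add: pauli1_fro)
    finally show ?thesis .
  qed
  then show ?thesis by simp
qed

lemma pauli_zero:
  assumes "i < 2^n" "j < 2^n"
  shows "pauli n (replicate n 0) i j = (if i = j then 1 else 0)"
proof -
  let ?b = "\<lambda>i m. i div 2^(n-1-m) mod (2::nat)"
  have "pauli n (replicate n 0) i j = (\<Prod>m<n. if ?b i m = ?b j m then 1 else 0)"
    unfolding pauli_def by (rule prod.cong) (auto simp: pauli1_def)
  also have "\<dots> = (if (\<forall>m<n. ?b i m = ?b j m) then 1 else 0)"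
    by (rule prod_if_one)
  also have "(\<forall>m<n. ?b i m = ?b j m) \<longleftrightarrow> i = j"
    using bit_inj[of i n j] assms by auto
  finally show ?thesis by simp
qed

lemma zero_in_pauli_idx: "replicate n 0 \<in> pauli_idx n"
  by (simp add: pauli_idx_def set_replicate_conv_if)



definition tr2 :: "nat \<Rightarrow> cmat \<Rightarrow> cmat \<Rightarrow> complex" where
  "tr2 d A B = (\<Sum>i<d. \<Sum>j<d. A i j * B j i)"

definition fro :: "nat \<Rightarrow> cmat \<Rightarrow> real" where
  "fro d A = (\<Sum>i<d. \<Sum>j<d. cmod (A i j) ^ 2)"

lemma of_real_fro: "complex_of_real (fro d A) = (\<Sum>i<d. \<Sum>j<d. A i j * cnj (A i j))"
  by (simp only: fro_def of_real_sum complex_norm_square)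

lemma double_delta:
  fixes c :: "'a::comm_monoid_add"
  assumes "k < d" "l < (d::nat)"
  shows "(\<Sum>i<d. \<Sum>j<d. if i = k \<and> j = l then c else 0) = c"
proof -
  have "(\<Sum>j<d. if i = k \<and> j = l then c else 0) = (if i = k then c else 0)" for i
    using assms by (cases "i = k") (simp_all add: sum.delta sum.delta')
  then show ?thesis using assms by simp
qed

lemma repmat_tr2:
  "repmat n U z x = tr2 (2^n) (pauli n z) (mmul (2^n) (mmul (2^n) U (pauli n x)) (adj U)) / 2^n"
  unfolding repmat_def tr2_def mtrace_def by (simp add: mmul_def)

lemma tr2_cyc:
  "tr2 d A (mmul d (mmul d U C) (adj U)) = tr2 d C (mmul d (mmul d (adj U) A) U)"
proof -
  have "tr2 d A (mmul d (mmul d U C) (adj U)) =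
        (\<Sum>i<d. \<Sum>j<d. \<Sum>l<d. \<Sum>m<d. A i j * U j m * C m l * cnj (U i l))"
    unfolding tr2_def mmul_def adj_def
    by (simp add: sum_distrib_left sum_distrib_right mult.assoc)
  also have "\<dots> = (\<Sum>m<d. \<Sum>l<d. \<Sum>j<d. \<Sum>i<d. A i j * U j m * C m l * cnj (U i l))"
    apply (subst sum.swap)
    apply (subst (2) sum.swap)
    apply (subst (3) sum.swap)
    apply (subst sum.swap)
    apply (subst (2) sum.swap)
    apply (subst sum.swap)
    apply (rule refl)
    done
  also have "\<dots> = tr2 d C (mmul d (mmul d (adj U) A) U)"
    unfolding tr2_def mmul_def adj_def
    by (simp add: sum_distrib_left sum_distrib_right mult_ac)
  finally show ?thesis .
qed

lemma pauli_expand: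
  assumes "l < 2^n" "k < 2^n"
  shows "(\<Sum>z\<in>pauli_idx n. tr2 (2^n) (pauli n z) B * pauli n z l k) = 2^n * B l k"
proof -
  have "(\<Sum>z\<in>pauli_idx n. tr2 (2^n) (pauli n z) B * pauli n z l k)
      = (\<Sum>i<2^n. \<Sum>j<2^n. B j i * (\<Sum>z\<in>pauli_idx n. pauli n z i j * pauli n z l k))"
    unfolding tr2_def
    by (simp add: sum_distrib_left sum_distrib_right mult_ac sum.swap[of _ "pauli_idx n"])
  also have "\<dots> = (\<Sum>i<2^n. \<Sum>j<2^n. B j i * (2^n * (if i = k \<and> j = l then 1 else 0)))"
    by (intro sum.cong refl) (simp add: pauli_complete assms)
  also have "\<dots> = 2^n * B l k"
    using assms double_delta[of k "2^n" l "B l k * 2^n"] by (simp add: if_distrib mult.commute cong: if_cong)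
  finally show ?thesis .
qed



lemma delta4:
  fixes c :: "nat \<Rightarrow> nat \<Rightarrow> 'a::comm_monoid_add"
  assumes "k < d"
  shows "(\<Sum>i<d. \<Sum>l<d. \<Sum>j<d. if i = k \<and> j = l then c i j else 0) = (\<Sum>l<d. c k l)"
proof -
  have "(\<Sum>l<d. \<Sum>j<d. if i = k \<and> j = l then c i j else 0) = (if i = k then (\<Sum>l<d. c k l) else 0)" for i
    by (cases "i = k") simp_all
  then show ?thesis using assms by simp
qed

lemma parseval:
  "(\<Sum>x\<in>pauli_idx n. cmod (tr2 (2^n) (pauli n x) A) ^ 2) = 2^n * fro (2^n) A"
proof -
  let ?d = "2^n :: nat"
  let ?t = "\<lambda>x. tr2 ?d (pauli n x) A"
  have 1: "?t x * cnj (?t x) = (\<Sum>k<?d. \<Sum>i<?d. \<Sum>l<?d. \<Sum>j<?d. pauli n x i j * pauli n x l k * (A j i * cnj (A l k)))" for x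
    by (simp add: tr2_def sum_distrib_left sum_distrib_right pauli_herm mult_ac)
  have "(\<Sum>x\<in>pauli_idx n. ?t x * cnj (?t x)) = (\<Sum>k<?d. \<Sum>i<?d. \<Sum>l<?d. \<Sum>j<?d. (\<Sum>x\<in>pauli_idx n. pauli n x i j * pauli n x l k) * (A j i * cnj (A l k)))"
    by (simp only: 1 sum_distrib_right sum.swap[of _ "pauli_idx n"])
  also have "\<dots> = (\<Sum>k<?d. \<Sum>i<?d. \<Sum>l<?d. \<Sum>j<?d. if i = k \<and> j = l then 2^n * (A j i * cnj (A j i)) else 0)"
    by (intro sum.cong refl) (auto simp: pauli_complete)
  also have "\<dots> = (\<Sum>k<?d. \<Sum>l<?d. 2^n * (A l k * cnj (A l k)))"
    by (rule sum.cong[OF refl]) (simp add: delta4)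
  also have "\<dots> = 2^n * (\<Sum>k<?d. \<Sum>l<?d. A l k * cnj (A l k))"
    by (simp add: sum_distrib_left)
  also have "\<dots> = 2^n * (\<Sum>l<?d. \<Sum>k<?d. A l k * cnj (A l k))"
    by (subst sum.swap) (rule refl)
  finally have X: "(\<Sum>x\<in>pauli_idx n. ?t x * cnj (?t x)) = 2 ^ n * (\<Sum>l<?d. \<Sum>k<?d. A l k * cnj (A l k))" .
  have "complex_of_real (\<Sum>x\<in>pauli_idx n. cmod (?t x) ^ 2) = complex_of_real (2^n * fro ?d A)"
    unfolding of_real_sum complex_norm_square of_real_mult of_real_fro using X by simp
  then show ?thesis by (simp only: of_real_eq_iff)
qed

lemma vec_unitary:
  assumes "\<forall>i<d. \<forall>j<d. mmul d W (adj W) i j = (if i = j then 1 else 0)"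
  shows "(\<Sum>j<d. cmod (\<Sum>k<d. a k * W k j) ^ 2) = (\<Sum>k<d. cmod (a k) ^ 2)"
proof -
  have "(\<Sum>j<d. (\<Sum>k<d. a k * W k j) * cnj (\<Sum>k<d. a k * W k j))
      = (\<Sum>j<d. \<Sum>k'<d. \<Sum>k<d. a k * cnj (a k') * (W k j * cnj (W k' j)))"
    by (simp add: sum_distrib_left sum_distrib_right mult_ac)
  also have "\<dots> = (\<Sum>k'<d. \<Sum>j<d. \<Sum>k<d. a k * cnj (a k') * (W k j * cnj (W k' j)))"
    by (subst sum.swap) (rule refl)
  also have "\<dots> = (\<Sum>k'<d. \<Sum>k<d. \<Sum>j<d. a k * cnj (a k') * (W k j * cnj (W k' j)))"
    by (rule sum.cong[OF refl], subst sum.swap) (rule refl)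
  also have "\<dots> = (\<Sum>k'<d. \<Sum>k<d. a k * cnj (a k') * (\<Sum>j<d. W k j * cnj (W k' j)))"
    by (simp add: sum_distrib_left)
  also have "\<dots> = (\<Sum>k'<d. \<Sum>k<d. if k = k' then a k * cnj (a k) else 0)"
    using assms by (intro sum.cong refl) (auto simp: mmul_def adj_def)
  also have "\<dots> = (\<Sum>k<d. a k * cnj (a k))"
    by simp
  finally have "complex_of_real (\<Sum>j<d. cmod (\<Sum>k<d. a k * W k j) ^ 2) = complex_of_real (\<Sum>k<d. cmod (a k) ^ 2)"
    by (simp only: of_real_sum complex_norm_square)
  then show ?thesis by (simp only: of_real_eq_iff)
qed

lemma fro_conj:
  assumes "\<forall>i<d. \<forall>j<d. mmul d W (adj W) i j = (if i = j then 1 else 0)"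
  shows "fro d (mmul d (mmul d (adj W) A) W) = fro d A"
proof -
  let ?B = "mmul d (adj W) A"
  have "fro d (mmul d ?B W) = (\<Sum>i<d. \<Sum>j<d. cmod (\<Sum>k<d. ?B i k * W k j) ^ 2)"
    by (simp add: fro_def mmul_def)
  also have "\<dots> = (\<Sum>i<d. \<Sum>k<d. cmod (?B i k) ^ 2)"
    by (intro sum.cong refl vec_unitary assms)
  also have "\<dots> = (\<Sum>k<d. \<Sum>i<d. cmod (\<Sum>l<d. cnj (A l k) * W l i) ^ 2)"
  proof -
    have "cmod (?B i k) = cmod (\<Sum>l<d. cnj (A l k) * W l i)" for i k
    proof -
      have "(\<Sum>l<d. cnj (A l k) * W l i) = cnj (?B i k)"
        by (simp add: mmul_def adj_def mult.commute)
      then show ?thesis by (simp only: complex_mod_cnj)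
    qed
    then show ?thesis by (subst sum.swap) simp
  qed
  also have "\<dots> = (\<Sum>k<d. \<Sum>l<d. cmod (cnj (A l k)) ^ 2)"
    by (intro sum.cong refl vec_unitary assms)
  also have "\<dots> = fro d A"
    by (simp add: fro_def) (subst sum.swap, rule refl)
  finally show ?thesis .
qed



lemma adj_adj: "adj (adj U) = U"
  by (simp add: adj_def)

lemma repmat_tr2':
  "repmat n U z x = tr2 (2^n) (pauli n x) (mmul (2^n) (mmul (2^n) (adj U) (pauli n z)) U) / 2^n"
  by (subst repmat_tr2, subst tr2_cyc, rule refl)

lemma fro_pauli: "fro (2^n) (pauli n z) = 2^n"
  using pauli_fro[of n z] by (simp add: fro_def)

lemma cmod_div_pow: "cmod (w / 2^n) = cmod w / 2^n"
  by (simp add: norm_divide norm_power)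

lemma row_parseval:
  assumes "is_unitary n U"
  shows "(\<Sum>x\<in>pauli_idx n. cmod (repmat n U z x) ^ 2) = 1"
proof -
  let ?A = "mmul (2^n) (mmul (2^n) (adj U) (pauli n z)) U"
  have u: "\<forall>i<2^n. \<forall>j<2^n. mmul (2^n) U (adj U) i j = (if i = j then 1 else 0)"
    using assms by (simp add: is_unitary_def)
  have "(\<Sum>x\<in>pauli_idx n. cmod (repmat n U z x) ^ 2) = (\<Sum>x\<in>pauli_idx n. cmod (tr2 (2^n) (pauli n x) ?A) ^ 2) / (2^n)^2"
    by (simp add: repmat_tr2' cmod_div_pow power_divide sum_divide_distrib)
  also have "\<dots> = 2^n * fro (2^n) ?A / (2^n)^2"
    by (simp add: parseval)
  also have "fro (2^n) ?A = 2^n"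
    using fro_conj[OF u] fro_pauli by simp
  finally show ?thesis by (simp add: power2_eq_square)
qed

lemma col_parseval:
  assumes "is_unitary n U"
  shows "(\<Sum>z\<in>pauli_idx n. cmod (repmat n U z x) ^ 2) = 1"
proof -
  let ?B = "mmul (2^n) (mmul (2^n) U (pauli n x)) (adj U)"
  have u: "\<forall>i<2^n. \<forall>j<2^n. mmul (2^n) (adj U) (adj (adj U)) i j = (if i = j then 1 else 0)"
    using assms by (simp add: is_unitary_def adj_adj)
  have "(\<Sum>z\<in>pauli_idx n. cmod (repmat n U z x) ^ 2) = (\<Sum>z\<in>pauli_idx n. cmod (tr2 (2^n) (pauli n z) ?B) ^ 2) / (2^n)^2"
    by (simp add: repmat_tr2 cmod_div_pow power_divide sum_divide_distrib)
  also have "\<dots> = 2^n * fro (2^n) ?B / (2^n)^2"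
    by (simp add: parseval)
  also have "fro (2^n) ?B = 2^n"
    using fro_conj[OF u, of "pauli n x"] fro_pauli by (simp add: adj_adj)
  finally show ?thesis by (simp add: power2_eq_square)
qed

lemma repmat_zero:
  assumes "is_unitary n U"
  shows "repmat n U (replicate n 0) (replicate n 0) = 1"
proof -
  let ?P = "pauli n (replicate n 0)"
  let ?B = "mmul (2^n) (mmul (2^n) U ?P) (adj U)"
  have m1: "mmul (2^n) U ?P i l = U i l" if "l < 2^n" for i l
    using that by (simp add: mmul_def pauli_zero if_distrib cong: if_cong)
  have b: "?B i i = 1" if "i < 2^n" for i
  proof -
    have "?B i i = (\<Sum>l<2^n. mmul (2^n) U ?P i l * adj U l i)"
      by (simp only: mmul_def[of "2^n" "mmul (2^n) U ?P" "adj U"])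
    also have "\<dots> = (\<Sum>l<2^n. U i l * adj U l i)"
      by (intro sum.cong refl) (simp add: m1)
    also have "\<dots> = mmul (2^n) U (adj U) i i"
      by (simp add: mmul_def)
    also have "\<dots> = 1" using assms that by (simp add: is_unitary_def)
    finally show ?thesis .
  qed
  have "tr2 (2^n) ?P ?B = (\<Sum>i<2^n. ?B i i)"
  proof -
    have e: "((if P then 1 else 0) * c) = (if P then c else (0::complex))" for P c by simp
    show ?thesis unfolding tr2_def by (intro sum.cong refl) (simp add: pauli_zero e)
  qed
  also have "\<dots> = 2^n" by (simp add: b)
  finally show ?thesis by (simp add: repmat_tr2)
qed



definition E01 :: "nat \<Rightarrow> cmat \<Rightarrow> bool" where
  "E01 n U \<longleftrightarrow> (\<forall>z\<in>pauli_idx n. \<forall>x\<in>pauli_idx n. cmod (repmat n U z x) = 0 \<or> cmod (repmat n U z x) = 1)"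

lemma sum_sq_single:
  fixes f :: "'a \<Rightarrow> real"
  assumes "finite S" "w \<in> S" "(\<Sum>z\<in>S. f z ^ 2) = 1" "f w = 1 \<or> f w = -1"
  shows "\<forall>z\<in>S. z \<noteq> w \<longrightarrow> f z = 0"
proof -
  have "(\<Sum>z\<in>S. f z ^ 2) = f w ^ 2 + (\<Sum>z\<in>S - {w}. f z ^ 2)"
    using assms(1,2) by (simp add: sum.remove)
  then have "(\<Sum>z\<in>S - {w}. f z ^ 2) = 0" using assms(3,4) by auto
  then have "\<forall>z\<in>S - {w}. f z ^ 2 = 0"
    using assms(1) by (subst (asm) sum_nonneg_eq_0_iff) auto
  then show ?thesis by auto
qed

lemma tr2_self_pauli: "tr2 (2^n) (pauli n w) (pauli n w) = 2^n"
proof -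
  have "tr2 (2^n) (pauli n w) (pauli n w) = (\<Sum>i<2^n. \<Sum>j<2^n. pauli n w i j * cnj (pauli n w i j))"
    by (simp add: tr2_def pauli_herm)
  also have "\<dots> = complex_of_real (fro (2^n) (pauli n w))" by (simp add: of_real_fro)
  finally show ?thesis by (simp add: fro_pauli)
qed

lemma clifford_imp_E01:
  assumes "is_clifford n U"
  shows "E01 n U"
  unfolding E01_def
proof (intro ballI)
  fix z x assume z: "z \<in> pauli_idx n" and x: "x \<in> pauli_idx n"
  have u: "is_unitary n U" using assms by (simp add: is_clifford_def)
  obtain c w where c: "cmod c = 1" and w: "w \<in> pauli_idx n" and
    B: "\<forall>i<2^n. \<forall>j<2^n. mmul (2^n) (mmul (2^n) U (pauli n x)) (adj U) i j = c * pauli n w i j"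
    using assms x unfolding is_clifford_def by blast
  have Mw: "repmat n U w x = c"
  proof -
    have "tr2 (2^n) (pauli n w) (mmul (2^n) (mmul (2^n) U (pauli n x)) (adj U)) = tr2 (2^n) (pauli n w) (\<lambda>i j. c * pauli n w i j)"
      unfolding tr2_def by (intro sum.cong refl) (simp add: B)
    also have "\<dots> = c * tr2 (2^n) (pauli n w) (pauli n w)"
      by (simp add: tr2_def sum_distrib_left mult_ac)
    finally show ?thesis by (simp add: repmat_tr2 tr2_self_pauli)
  qed
  have "\<forall>z'\<in>pauli_idx n. z' \<noteq> w \<longrightarrow> cmod (repmat n U z' x) = 0"
    by (rule sum_sq_single[OF finite_pauli_idx w col_parseval[OF u]]) (simp add: Mw c)
  then show "cmod (repmat n U z x) = 0 \<or> cmod (repmat n U z x) = 1"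
    using z Mw c by (cases "z = w") auto
qed

lemma E01_imp_clifford:
  assumes u: "is_unitary n U" and E: "E01 n U"
  shows "is_clifford n U"
  unfolding is_clifford_def
proof (intro conjI u ballI)
  fix x assume x: "x \<in> pauli_idx n"
  let ?M = "\<lambda>z. repmat n U z x"
  let ?B = "mmul (2^n) (mmul (2^n) U (pauli n x)) (adj U)"
  have par: "(\<Sum>z\<in>pauli_idx n. cmod (?M z) ^ 2) = 1" by (rule col_parseval[OF u])
  obtain w where w: "w \<in> pauli_idx n" and Mw: "cmod (?M w) = 1"
  proof (rule ccontr)
    assume "\<not> thesis"
    with that have "\<forall>z\<in>pauli_idx n. cmod (?M z) = 0" using E x unfolding E01_def by blast
    then have "(\<Sum>z\<in>pauli_idx n. cmod (?M z) ^ 2) = 0" by simp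
    with par show False by simp
  qed
  have others: "\<forall>z\<in>pauli_idx n. z \<noteq> w \<longrightarrow> cmod (?M z) = 0"
    by (rule sum_sq_single[OF finite_pauli_idx w par]) (simp add: Mw)
  have "?B i j = ?M w * pauli n w i j" if "i < 2^n" "j < 2^n" for i j
  proof -
    have "2^n * ?B i j = (\<Sum>z\<in>pauli_idx n. tr2 (2^n) (pauli n z) ?B * pauli n z i j)"
      using pauli_expand[OF that] by simp
    also have "\<dots> = 2^n * (\<Sum>z\<in>pauli_idx n. ?M z * pauli n z i j)"
      by (simp add: repmat_tr2 sum_distrib_left)
    also have "(\<Sum>z\<in>pauli_idx n. ?M z * pauli n z i j) = ?M w * pauli n w i j"
    proof -
      have "(\<Sum>z\<in>pauli_idx n. ?M z * pauli n z i j) = ?M w * pauli n w i j + (\<Sum>z\<in>pauli_idx n - {w}. ?M z * pauli n z i j)"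
        using w finite_pauli_idx by (simp add: sum.remove)
      also have "(\<Sum>z\<in>pauli_idx n - {w}. ?M z * pauli n z i j) = 0"
        using others by (intro sum.neutral) auto
      finally show ?thesis by simp
    qed
    finally show ?thesis by simp
  qed
  then show "\<exists>c z. cmod c = 1 \<and> z \<in> pauli_idx n \<and> (\<forall>i<2 ^ n. \<forall>j<2 ^ n. ?B i j = c * pauli n z i j)"
    using Mw w by blast
qed



lemma sq_powr: "0 \<le> (a::real) \<Longrightarrow> a ^ 2 = a powr 2"
  using powr_realpow'[of a 2] by simp

lemma pw_lt2:
  fixes a p :: real
  assumes "0 \<le> a" "a \<le> 1" "0 < p" "p < 2"
  shows "a ^ 2 \<le> a powr p \<and> (a powr p = a ^ 2 \<longleftrightarrow> a = 0 \<or> a = 1)"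
proof (cases "a = 0 \<or> a = 1")
  case True then show ?thesis by auto
next
  case False
  then have a0: "0 < a" and a1: "a < 1" using assms by auto
  have "a powr 2 < a powr p" using powr_less_mono'[OF a0 a1, of p 2] assms(4) by simp
  then show ?thesis using False sq_powr[OF assms(1)] by auto
qed

lemma pw_gt2:
  fixes a p :: real
  assumes "0 \<le> a" "a \<le> 1" "2 < p"
  shows "a powr p \<le> a ^ 2 \<and> (a powr p = a ^ 2 \<longleftrightarrow> a = 0 \<or> a = 1)"
proof (cases "a = 0 \<or> a = 1")
  case True then show ?thesis using assms by auto
next
  case False
  then have a0: "0 < a" and a1: "a < 1" using assms by auto
  have "a powr p < a powr 2" using powr_less_mono'[OF a0 a1, of 2 p] assms(3) by simp
  then show ?thesis using False sq_powr[OF assms(1)] by auto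
qed

lemma le1_of_sum_sq:
  fixes a :: "'b \<Rightarrow> real"
  assumes "finite S" "x \<in> S" "(\<Sum>y\<in>S. a y ^ 2) = 1"
  shows "a x ^ 2 \<le> 1"
  using member_le_sum[of x S "\<lambda>y. a y ^ 2"] assms by simp

lemma row_lt2:
  fixes a :: "'b \<Rightarrow> real"
  assumes fin: "finite S" and nn: "\<forall>x\<in>S. 0 \<le> a x" and s: "(\<Sum>x\<in>S. a x ^ 2) = 1" and p: "0 < p" "p < 2"
  shows "1 \<le> (\<Sum>x\<in>S. a x powr p) powr (1/p) \<and>
         ((\<Sum>x\<in>S. a x powr p) powr (1/p) = 1 \<longleftrightarrow> (\<forall>x\<in>S. a x = 0 \<or> a x = 1))"
proof -
  have le1: "a x \<le> 1" if "x \<in> S" for x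
    using le1_of_sum_sq[OF fin that s] nn that by (simp add: power_le_one_iff)
  have pw: "a x ^ 2 \<le> a x powr p \<and> (a x powr p = a x ^ 2 \<longleftrightarrow> a x = 0 \<or> a x = 1)" if "x \<in> S" for x
    using pw_lt2[OF _ le1[OF that] p] nn that by blast
  let ?S = "\<Sum>x\<in>S. a x powr p"
  have S1: "1 \<le> ?S" using sum_mono[of S "\<lambda>x. a x ^ 2" "\<lambda>x. a x powr p"] pw s by auto
  have ge: "1 \<le> ?S powr (1/p)" using S1 p by (intro ge_one_powr_ge_zero) auto
  have "?S powr (1/p) = 1 \<longleftrightarrow> ?S = 1"
  proof
    assume h: "?S powr (1/p) = 1"
    show "?S = 1"
    proof (rule ccontr)
      assume "?S \<noteq> 1"
      with S1 have "1 < ?S" by simp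
      with h p show False by simp
    qed
  qed simp
  also have "?S = 1 \<longleftrightarrow> (\<Sum>x\<in>S. a x powr p - a x ^ 2) = 0"
    using s by (simp add: sum_subtractf)
  also have "\<dots> \<longleftrightarrow> (\<forall>x\<in>S. a x powr p - a x ^ 2 = 0)"
    using fin pw by (intro sum_nonneg_eq_0_iff) auto
  also have "\<dots> \<longleftrightarrow> (\<forall>x\<in>S. a x = 0 \<or> a x = 1)"
    using pw by auto
  finally show ?thesis using ge by blast
qed

lemma row_gt2:
  fixes a :: "'b \<Rightarrow> real"
  assumes fin: "finite S" and nn: "\<forall>x\<in>S. 0 \<le> a x" and s: "(\<Sum>x\<in>S. a x ^ 2) = 1" and p: "2 < p"
  shows "(\<Sum>x\<in>S. a x powr p) powr (1/p) \<le> 1 \<and>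
         ((\<Sum>x\<in>S. a x powr p) powr (1/p) = 1 \<longleftrightarrow> (\<forall>x\<in>S. a x = 0 \<or> a x = 1))"
proof -
  have le1: "a x \<le> 1" if "x \<in> S" for x
    using le1_of_sum_sq[OF fin that s] nn that by (simp add: power_le_one_iff)
  have pw: "a x powr p \<le> a x ^ 2 \<and> (a x powr p = a x ^ 2 \<longleftrightarrow> a x = 0 \<or> a x = 1)" if "x \<in> S" for x
    using pw_gt2[OF _ le1[OF that] p] nn that by blast
  let ?S = "\<Sum>x\<in>S. a x powr p"
  have S1: "?S \<le> 1" using sum_mono[of S "\<lambda>x. a x powr p" "\<lambda>x. a x ^ 2"] pw s by auto
  have S0: "0 \<le> ?S" by (simp add: sum_nonneg)
  have le: "?S powr (1/p) \<le> 1" using S1 S0 p by (intro powr_le1) auto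
  have "?S powr (1/p) = 1 \<longleftrightarrow> ?S = 1"
  proof
    assume h: "?S powr (1/p) = 1"
    show "?S = 1"
    proof (rule ccontr)
      assume "?S \<noteq> 1"
      with S1 have "?S < 1" by simp
      then have "?S powr (1/p) < 1 powr (1/p)" using S0 p by (intro powr_less_mono2) auto
      with h show False by simp
    qed
  qed simp
  also have "?S = 1 \<longleftrightarrow> (\<Sum>x\<in>S. a x ^ 2 - a x powr p) = 0"
    using s by (simp add: sum_subtractf)
  also have "\<dots> \<longleftrightarrow> (\<forall>x\<in>S. a x ^ 2 - a x powr p = 0)"
    using fin pw by (intro sum_nonneg_eq_0_iff) auto
  also have "\<dots> \<longleftrightarrow> (\<forall>x\<in>S. a x = 0 \<or> a x = 1)"
  proof -
    have "a x ^ 2 - a x powr p = 0 \<longleftrightarrow> a x = 0 \<or> a x = 1" if "x \<in> S" for x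
      using pw[OF that] by (metis right_minus_eq)
    then show ?thesis by auto
  qed
  finally show ?thesis using le by blast
qed

lemma row_eq2:
  fixes a :: "'b \<Rightarrow> real"
  assumes nn: "\<forall>x\<in>S. 0 \<le> a x" and s: "(\<Sum>x\<in>S. a x ^ 2) = 1"
  shows "(\<Sum>x\<in>S. a x powr 2) powr (1/2) = 1"
proof -
  have "(\<Sum>x\<in>S. a x powr 2) = (\<Sum>x\<in>S. a x ^ 2)"
  proof (rule sum.cong[OF refl])
    fix x assume "x \<in> S"
    then have "0 \<le> a x" using nn by blast
    then show "a x powr 2 = a x ^ 2" by (rule sq_powr[symmetric])
  qed
  then have "(\<Sum>x\<in>S. a x powr 2) = 1" using s by simp
  then show ?thesis by simp
qed

lemma grp_ge:
  fixes r :: "'b \<Rightarrow> real"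
  assumes fin: "finite X" and ne: "X \<noteq> {}" and r: "\<forall>z\<in>X. 1 \<le> r z" and Q: "0 < Q"
  shows "1 \<le> ((1 / real (card X)) * (\<Sum>z\<in>X. r z powr Q)) powr (1/Q) \<and>
         (((1 / real (card X)) * (\<Sum>z\<in>X. r z powr Q)) powr (1/Q) = 1 \<longleftrightarrow> (\<forall>z\<in>X. r z = 1))"
proof -
  have c: "0 < real (card X)" using fin ne by (simp add: card_gt_0_iff)
  have rq: "1 \<le> r z powr Q" if "z \<in> X" for z using r that Q by (intro ge_one_powr_ge_zero) auto
  let ?A = "(1 / real (card X)) * (\<Sum>z\<in>X. r z powr Q)"
  have sge: "real (card X) \<le> (\<Sum>z\<in>X. r z powr Q)"
    using sum_mono[of X "\<lambda>_. 1" "\<lambda>z. r z powr Q"] rq by simp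
  have A1: "1 \<le> ?A" using sge c by (simp add: field_simps)
  have ge: "1 \<le> ?A powr (1/Q)" using A1 Q by (intro ge_one_powr_ge_zero) auto
  have "?A powr (1/Q) = 1 \<longleftrightarrow> ?A = 1"
  proof
    assume h: "?A powr (1/Q) = 1"
    show "?A = 1"
    proof (rule ccontr)
      assume ne1: "?A \<noteq> 1"
      have "1 < ?A" using A1 ne1 by linarith
      with h Q show False by simp
    qed
  qed simp
  also have "?A = 1 \<longleftrightarrow> (\<Sum>z\<in>X. r z powr Q - 1) = 0"
    using c by (auto simp add: sum_subtractf field_simps)
  also have "\<dots> \<longleftrightarrow> (\<forall>z\<in>X. r z powr Q - 1 = 0)"
    using fin rq by (intro sum_nonneg_eq_0_iff) auto
  also have "\<dots> \<longleftrightarrow> (\<forall>z\<in>X. r z = 1)"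
  proof -
    have "r z powr Q = 1 \<longleftrightarrow> r z = 1" if "z \<in> X" for z
    proof
      assume h: "r z powr Q = 1"
      show "r z = 1"
      proof (rule ccontr)
        assume "r z \<noteq> 1"
        with r that have "1 < r z" by force
        with h Q show False by simp
      qed
    qed simp
    then show ?thesis by auto
  qed
  finally show ?thesis using ge by blast
qed

lemma grp_le:
  fixes r :: "'b \<Rightarrow> real"
  assumes fin: "finite X" and ne: "X \<noteq> {}" and r: "\<forall>z\<in>X. 0 \<le> r z \<and> r z \<le> 1" and Q: "0 < Q"
  shows "((1 / real (card X)) * (\<Sum>z\<in>X. r z powr Q)) powr (1/Q) \<le> 1 \<and>
         (((1 / real (card X)) * (\<Sum>z\<in>X. r z powr Q)) powr (1/Q) = 1 \<longleftrightarrow> (\<forall>z\<in>X. r z = 1))"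
proof -
  have c: "0 < real (card X)" using fin ne by (simp add: card_gt_0_iff)
  have rq: "r z powr Q \<le> 1" if "z \<in> X" for z using r that Q by (intro powr_le1) auto
  let ?A = "(1 / real (card X)) * (\<Sum>z\<in>X. r z powr Q)"
  have sle: "(\<Sum>z\<in>X. r z powr Q) \<le> real (card X)"
    using sum_mono[of X "\<lambda>z. r z powr Q" "\<lambda>_. 1"] rq by simp
  have A1: "?A \<le> 1" using sle c by (simp add: field_simps)
  have A0: "0 \<le> ?A" by (simp add: sum_nonneg)
  have le: "?A powr (1/Q) \<le> 1" using A1 A0 Q by (intro powr_le1) auto
  have "?A powr (1/Q) = 1 \<longleftrightarrow> ?A = 1"
  proof
    assume h: "?A powr (1/Q) = 1"
    show "?A = 1"
    proof (rule ccontr)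
      assume ne1: "?A \<noteq> 1"
      have "?A < 1" using A1 ne1 by linarith
      then have "?A powr (1/Q) < 1 powr (1/Q)" using A0 Q by (intro powr_less_mono2) auto
      with h show False by simp
    qed
  qed simp
  also have "?A = 1 \<longleftrightarrow> (\<Sum>z\<in>X. 1 - r z powr Q) = 0"
    using c by (simp add: sum_subtractf field_simps)
  also have "\<dots> \<longleftrightarrow> (\<forall>z\<in>X. 1 - r z powr Q = 0)"
    using fin rq by (intro sum_nonneg_eq_0_iff) auto
  also have "\<dots> \<longleftrightarrow> (\<forall>z\<in>X. r z = 1)"
  proof -
    have "r z powr Q = 1 \<longleftrightarrow> r z = 1" if "z \<in> X" for z
    proof
      assume h: "r z powr Q = 1"
      show "r z = 1"
      proof (rule ccontr)
        assume "r z \<noteq> 1"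
        with r that have "r z < 1" "0 \<le> r z" by force+
        then have "r z powr Q < 1 powr Q" using Q by (intro powr_less_mono2) auto
        with h show False by simp
      qed
    qed simp
    then show ?thesis by auto
  qed
  finally show ?thesis using le by blast
qed

lemma max_ge:
  fixes r :: "'b \<Rightarrow> real"
  assumes fin: "finite X" and ne: "X \<noteq> {}" and r: "\<forall>z\<in>X. 1 \<le> r z"
  shows "1 \<le> Max (r ` X) \<and> (Max (r ` X) = 1 \<longleftrightarrow> (\<forall>z\<in>X. r z = 1))"
proof -
  obtain z0 where z0: "z0 \<in> X" using ne by blast
  have mx: "r z \<le> Max (r ` X)" if "z \<in> X" for z using fin that by (intro Max_ge) auto
  have "1 \<le> Max (r ` X)" using mx[OF z0] r z0 by force
  moreover have "Max (r ` X) = 1 \<longleftrightarrow> (\<forall>z\<in>X. r z = 1)"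
  proof
    assume "Max (r ` X) = 1" then show "\<forall>z\<in>X. r z = 1" using mx r by force
  next
    assume h: "\<forall>z\<in>X. r z = 1"
    then have "r ` X = {1}" using ne by auto
    then show "Max (r ` X) = 1" by simp
  qed
  ultimately show ?thesis by blast
qed

lemma max_eq1:
  fixes r :: "'b \<Rightarrow> real"
  assumes fin: "finite X" and r: "\<forall>z\<in>X. r z \<le> 1" and z0: "z0 \<in> X" "r z0 = 1"
  shows "Max (r ` X) = 1"
  using assms by (intro Max_eqI) auto



lemma pauli_idx_ne: "pauli_idx n \<noteq> {}"
  using zero_in_pauli_idx by blast

lemma ereal_pos_fin:
  fixes q :: ereal
  assumes "0 < q" "q \<noteq> \<infinity>"
  shows "0 < real_of_ereal q"
  using assms by (cases q) auto

lemma gn_fin: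
  assumes "q \<noteq> \<infinity>"
  shows "group_norm n U p q = ((1 / real (card (pauli_idx n))) *
            (\<Sum>z\<in>pauli_idx n. row_pnorm n U p z powr real_of_ereal q)) powr (1 / real_of_ereal q)"
  using assms by (simp add: group_norm_def)

lemma gn_inf: "group_norm n U p \<infinity> = Max (row_pnorm n U p ` pauli_idx n)"
  by (simp add: group_norm_def)

lemma row_pnorm_nonneg: "0 \<le> row_pnorm n U p z"
  by (simp add: row_pnorm_def)

theorem mainTheorem11:
  fixes n :: nat and U :: cmat
  assumes "is_unitary n U"
  shows "(\<forall>(p::real) (q::ereal). 0 < p \<and> p < 2 \<and> 0 < q \<longrightarrow>
            group_norm n U p q \<ge> 1 \<and> (group_norm n U p q = 1 \<longleftrightarrow> is_clifford n U))
       \<and> (\<forall>(p::real) (q::ereal). p > 2 \<and> 0 < q \<and> q < \<infinity> \<longrightarrow>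
            group_norm n U p q \<le> 1 \<and> (group_norm n U p q = 1 \<longleftrightarrow> is_clifford n U))
       \<and> (\<forall>q::ereal. 0 < q \<longrightarrow> group_norm n U 2 q = 1)
       \<and> (\<forall>p::real. p > 2 \<longrightarrow> group_norm n U p \<infinity> = 1)"
proof -
  let ?X = "pauli_idx n"
  let ?a = "\<lambda>z x. cmod (repmat n U z x)"
  have fin: "finite ?X" by (rule finite_pauli_idx)
  have ne: "?X \<noteq> {}" by (rule pauli_idx_ne)
  have rp: "\<And>z. (\<Sum>x\<in>?X. ?a z x ^ 2) = 1" using row_parseval[OF assms] .
  have nn: "\<And>z. \<forall>x\<in>?X. 0 \<le> ?a z x" by simp
  have cliff: "is_clifford n U \<longleftrightarrow> (\<forall>z\<in>?X. \<forall>x\<in>?X. ?a z x = 0 \<or> ?a z x = 1)"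
    using clifford_imp_E01 E01_imp_clifford[OF assms] unfolding E01_def by blast
  have P1: "group_norm n U p q \<ge> 1 \<and> (group_norm n U p q = 1 \<longleftrightarrow> is_clifford n U)"
    if p: "0 < p" "p < 2" and q: "0 < q" for p q
  proof -
    have R: "\<forall>z\<in>?X. 1 \<le> row_pnorm n U p z \<and> (row_pnorm n U p z = 1 \<longleftrightarrow> (\<forall>x\<in>?X. ?a z x = 0 \<or> ?a z x = 1))"
      using row_lt2[OF fin nn rp p] unfolding row_pnorm_def by blast
    have Rge: "\<forall>z\<in>?X. 1 \<le> row_pnorm n U p z" using R by blast
    have Req: "(\<forall>z\<in>?X. row_pnorm n U p z = 1) \<longleftrightarrow> is_clifford n U" using R cliff by blast
    show ?thesis
    proof (cases "q = \<infinity>")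
      case True
      then show ?thesis using max_ge[OF fin ne Rge] Req by (simp add: gn_inf)
    next
      case False
      then show ?thesis using grp_ge[OF fin ne Rge ereal_pos_fin[OF q False]] Req by (simp add: gn_fin)
    qed
  qed
  have P2: "group_norm n U p q \<le> 1 \<and> (group_norm n U p q = 1 \<longleftrightarrow> is_clifford n U)"
    if p: "2 < p" and q: "0 < q" "q < \<infinity>" for p q
  proof -
    have R: "\<forall>z\<in>?X. row_pnorm n U p z \<le> 1 \<and> (row_pnorm n U p z = 1 \<longleftrightarrow> (\<forall>x\<in>?X. ?a z x = 0 \<or> ?a z x = 1))"
      using row_gt2[OF fin nn rp p] unfolding row_pnorm_def by blast
    have Rle: "\<forall>z\<in>?X. 0 \<le> row_pnorm n U p z \<and> row_pnorm n U p z \<le> 1" using R row_pnorm_nonneg by blast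
    have Req: "(\<forall>z\<in>?X. row_pnorm n U p z = 1) \<longleftrightarrow> is_clifford n U" using R cliff by blast
    have qf: "q \<noteq> \<infinity>" using q by simp
    show ?thesis using grp_le[OF fin ne Rle ereal_pos_fin[OF q(1) qf]] Req by (simp add: gn_fin qf)
  qed
  have P3: "group_norm n U 2 q = 1" if q: "0 < q" for q
  proof -
    have R: "\<forall>z\<in>?X. row_pnorm n U 2 z = 1"
      using row_eq2[OF nn rp] unfolding row_pnorm_def by simp
    then have Rge: "\<forall>z\<in>?X. 1 \<le> row_pnorm n U 2 z" by simp
    show ?thesis
    proof (cases "q = \<infinity>")
      case True
      then show ?thesis using max_ge[OF fin ne Rge] R by (simp add: gn_inf)
    next
      case False
      then show ?thesis using grp_ge[OF fin ne Rge ereal_pos_fin[OF q False]] R by (simp add: gn_fin)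
    qed
  qed
  have P4: "group_norm n U p \<infinity> = 1" if p: "2 < p" for p
  proof -
    let ?z0 = "replicate n 0"
    have z0: "?z0 \<in> ?X" by (rule zero_in_pauli_idx)
    have R: "\<forall>z\<in>?X. row_pnorm n U p z \<le> 1 \<and> (row_pnorm n U p z = 1 \<longleftrightarrow> (\<forall>x\<in>?X. ?a z x = 0 \<or> ?a z x = 1))"
      using row_gt2[OF fin nn rp p] unfolding row_pnorm_def by blast
    have a00: "?a ?z0 ?z0 = 1" using repmat_zero[OF assms] by simp
    have "\<forall>x\<in>?X. x \<noteq> ?z0 \<longrightarrow> ?a ?z0 x = 0"
      by (rule sum_sq_single[OF fin z0 rp]) (simp add: a00)
    then have "\<forall>x\<in>?X. ?a ?z0 x = 0 \<or> ?a ?z0 x = 1" using a00 by metis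
    then have r0: "row_pnorm n U p ?z0 = 1" using R z0 by blast
    have "Max (row_pnorm n U p ` ?X) = 1"
      using fin R z0 r0 by (intro Max_eqI) auto
    then show ?thesis by (simp add: gn_inf)
  qed
  show ?thesis using P1 P2 P3 P4 by blast
qed

end
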